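(* Let $\{Z_n\}_{n\in\mathbb{N}}$ be a sequence of diagonal matrices $Z_n=\mathrm{diag}(z_1^{(n)},\ldots,z_n^{(n)})$ with $z_j^{(n)}\geq 1$ having bounded squeezing of degree $\zeta$ with $0\leq\zeta<1$, and assume that the average energy $\lambda(n)=\frac{1}{2n}\sum_{j=1}^n (z_j^{(n)}+1/z_j^{(n)})$ is uniformly bounded in $n$. Let $\{k_n\}_{n\in\mathbb{N}}$ be a sequence of subsystem sizes bounded of degree $\kappa$ with $0\leq\kappa<1$. Then $$\mathbb{E}\big[\mathrm{tr}\big((J_{k_n}M_{n,k_n}(U))^2\big)\big]=-2k_n\lambda(n)^2+O(n^{2\kappa+\zeta-1}),$$ where the expectation is over $U$ drawn from the Haar measure on $U(n)$.
   Context: For $m\in\mathbb{N}$ let $J_m=\begin{pmatrix}0_m&-I_m\\ I_m&0_m\end{pmatrix}$. For $U\in U(n)$ let $\eta(U)=\begin{pmatrix}\mathrm{Re}(U)&\mathrm{Im}(U)\\ -\mathrm{Im}(U)&\mathrm{Re}(U)\end{pmatrix}$. Set $\hat Z_n=Z_n\oplus Z_n^{-1}$ and $M_n(U)=\eta(U)\hat Z_n\eta(U)^T$. For $1\leq k\leq n$, $M_{n,k}(U)$ denotes the $2k\times 2k$ submatrix of $M_n(U)$ with rows and columns indexed by $\{1,\ldots,k\}\cup\{n+1,\ldots,n+k\}$. A sequence $\{Z_n\}$ has bounded squeezing of degree $\zeta\ge0$ if there is $C>0$ with $\|Z_n\|_\infty\leq Cn^\zeta$ for all large enough $n$. A sequence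 $\{k_n\}$ with $k_n\in\{1,\ldots,n\}$ is bounded of degree $\kappa\ge0$ if there is $K>0$ with $k_n\leq Kn^\kappa$ for all large enough $n$. *)

theory Defs
  imports "HOL-Analysis.Analysis" "HOL-Probability.Probability"
begin

text \<open>Square matrices of size m are represented as functions nat => nat => 'a,
  with 0-based indices i, j < m; entries outside the range are zero.\<close>

definition mmul :: "nat \<Rightarrow> (nat \<Rightarrow> nat \<Rightarrow> 'a::comm_semiring_1) \<Rightarrow> (nat \<Rightarrow> nat \<Rightarrow> 'a) \<Rightarrow> nat \<Rightarrow> nat \<Rightarrow> 'a" where
  "mmul m A B = (\<lambda>i j. if i < m \<and> j < m then (\<Sum>l<m. A i l * B l j) else 0)"

definition idm :: "nat \<Rightarrow> nat \<Rightarrow> nat \<Rightarrow> 'a::zero_neq_one" where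
  "idm m = (\<lambda>i j. if i = j \<and> i < m then 1 else 0)"

definition mtrans :: "(nat \<Rightarrow> nat \<Rightarrow> 'a) \<Rightarrow> nat \<Rightarrow> nat \<Rightarrow> 'a" where
  "mtrans A = (\<lambda>i j. A j i)"

definition ctrans :: "(nat \<Rightarrow> nat \<Rightarrow> complex) \<Rightarrow> nat \<Rightarrow> nat \<Rightarrow> complex" where
  "ctrans A = (\<lambda>i j. cnj (A j i))"

definition mtrace :: "nat \<Rightarrow> (nat \<Rightarrow> nat \<Rightarrow> 'a::comm_monoid_add) \<Rightarrow> 'a" where
  "mtrace m A = (\<Sum>i<m. A i i)"

definition unitary_group :: "nat \<Rightarrow> (nat \<Rightarrow> nat \<Rightarrow> complex) set" where
  "unitary_group n = {U. (\<forall>i j. (n \<le> i \<or> n \<le> j) \<longrightarrow> U i j = 0) \<and> mmul n (ctrans U) U = idm n}"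

definition haar_unitary :: "nat \<Rightarrow> (nat \<Rightarrow> nat \<Rightarrow> complex) measure \<Rightarrow> bool" where
  "haar_unitary n \<mu> \<longleftrightarrow> sets \<mu> = sets borel \<and> prob_space \<mu> \<and>
     emeasure \<mu> (unitary_group n) = 1 \<and>
     (\<forall>A\<in>unitary_group n. distr \<mu> borel (mmul n A) = \<mu>)"

definition Jmat :: "nat \<Rightarrow> nat \<Rightarrow> nat \<Rightarrow> real" where
  "Jmat m = (\<lambda>i j. if i < m \<and> j = i + m then -1
                   else if m \<le> i \<and> i < 2*m \<and> j + m = i then 1 else 0)"

text \<open>eta(U) = [[Re U, Im U], [-Im U, Re U]] (size 2n).\<close>
definition eta :: "nat \<Rightarrow> (nat \<Rightarrow> nat \<Rightarrow> complex) \<Rightarrow> nat \<Rightarrow> nat \<Rightarrow> real" where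
  "eta n U = (\<lambda>a c.
     if a < n \<and> c < n then Re (U a c)
     else if a < n \<and> n \<le> c \<and> c < 2*n then Im (U a (c - n))
     else if n \<le> a \<and> a < 2*n \<and> c < n then - Im (U (a - n) c)
     else if n \<le> a \<and> a < 2*n \<and> n \<le> c \<and> c < 2*n then Re (U (a - n) (c - n))
     else 0)"

text \<open>Zhat_n = Z_n (+) Z_n^{-1}, where Z_n = diag(z n 0, ..., z n (n-1)).\<close>
definition Zhat :: "nat \<Rightarrow> (nat \<Rightarrow> nat \<Rightarrow> real) \<Rightarrow> nat \<Rightarrow> nat \<Rightarrow> real" where
  "Zhat n z = (\<lambda>a c. if a \<noteq> c then 0
                      else if a < n then z n a
                      else if a < 2*n then 1 / z n (a - n) else 0)"

definition Mn :: "nat \<Rightarrow> (nat \<Rightarrow> nat \<Rightarrow> real) \<Rightarrow> (nat \<Rightarrow> nat \<Rightarrow> complex) \<Rightarrow> nat \<Rightarrow> nat \<Rightarrow> real" where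
  "Mn n z U = mmul (2*n) (mmul (2*n) (eta n U) (Zhat n z)) (mtrans (eta n U))"

text \<open>M_{n,k}: rows/columns {1..k} and {n+1..n+k} (1-based); 0-based index map.\<close>
definition subidx :: "nat \<Rightarrow> nat \<Rightarrow> nat \<Rightarrow> nat" where
  "subidx n k i = (if i < k then i else n + (i - k))"

definition Mnk :: "nat \<Rightarrow> nat \<Rightarrow> (nat \<Rightarrow> nat \<Rightarrow> real) \<Rightarrow> (nat \<Rightarrow> nat \<Rightarrow> complex) \<Rightarrow> nat \<Rightarrow> nat \<Rightarrow> real" where
  "Mnk n k z U = (\<lambda>i j. if i < 2*k \<and> j < 2*k then Mn n z U (subidx n k i) (subidx n k j) else 0)"

text \<open>Sup norm of the diagonal matrix Z_n (largest diagonal entry in absolute value).\<close>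
definition Znorm :: "nat \<Rightarrow> (nat \<Rightarrow> nat \<Rightarrow> real) \<Rightarrow> real" where
  "Znorm n z = Max ((\<lambda>j. \<bar>z n j\<bar>) ` {..<n})"

definition avg_energy :: "nat \<Rightarrow> (nat \<Rightarrow> nat \<Rightarrow> real) \<Rightarrow> real" where
  "avg_energy n z = (1 / (2 * real n)) * (\<Sum>j<n. z n j + 1 / z n j)"

end

theory Submission
  imports Defs
begin

definition Pf :: "nat \<Rightarrow> (nat \<Rightarrow> real) \<Rightarrow> (nat \<Rightarrow> nat \<Rightarrow> complex) \<Rightarrow> nat \<Rightarrow> nat \<Rightarrow> complex" where
  "Pf n w U i j = (\<Sum>l<n. complex_of_real (w l) * U i l * cnj (U j l))"
definition Qf :: "nat \<Rightarrow> (nat \<Rightarrow> real) \<Rightarrow> (nat \<Rightarrow> nat \<Rightarrow> complex) \<Rightarrow> nat \<Rightarrow> nat \<Rightarrow> complex" where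
  "Qf n w U i j = (\<Sum>l<n. complex_of_real (w l) * U i l * U j l)"
definition wa :: "nat \<Rightarrow> (nat \<Rightarrow> nat \<Rightarrow> real) \<Rightarrow> nat \<Rightarrow> real" where
  "wa n z l = (z n l + 1 / z n l) / 2"
definition wb :: "nat \<Rightarrow> (nat \<Rightarrow> nat \<Rightarrow> real) \<Rightarrow> nat \<Rightarrow> real" where
  "wb n z l = (z n l - 1 / z n l) / 2"

lemma sum_split2: "(\<Sum>d<2*(n::nat). f d) = (\<Sum>l<n. f l) + (\<Sum>l<n. f (n+l)::'a::comm_monoid_add)"
proof -
  have "x \<in> (\<lambda>l. n+l) ` {..<n}" if "x < 2*n" "\<not> x < n" for x
    using that by (intro image_eqI[of _ _ "x-n"]) auto
  then have "{..<2*n} = {..<n} \<union> (\<lambda>l. n+l) ` {..<n}" by auto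
  moreover have "{..<n} \<inter> (\<lambda>l. n+l) ` {..<n} = {}" by auto
  ultimately show ?thesis by (simp add: sum.union_disjoint sum.reindex)
qed

lemma Mn_entry: assumes "a < 2*n" "c < 2*n"
  shows "Mn n z U a c = (\<Sum>d<2*n. eta n U a d * Zhat n z d d * eta n U c d)"
proof -
  have "\<And>d. d < 2*n \<Longrightarrow> (\<Sum>e<2*n. eta n U a e * Zhat n z e d) = eta n U a d * Zhat n z d d"
    by (subst sum.remove[where x=d]) (auto simp: Zhat_def)
  then show ?thesis using assms unfolding Mn_def mmul_def mtrans_def
    by (auto intro!: sum.cong)
qed

lemma eta_simps:
  assumes "i < n" "l < n"
  shows "eta n U i l = Re (U i l)" "eta n U i (n+l) = Im (U i l)"
    "eta n U (n+i) l = - Im (U i l)" "eta n U (n+i) (n+l) = Re (U i l)"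
  using assms by (auto simp: eta_def)

lemma Zhat_simps:
  assumes "l < n"
  shows "Zhat n z l l = z n l" "Zhat n z (n+l) (n+l) = 1 / z n l"
  using assms by (auto simp: Zhat_def)

lemma Mn_blocks:
  assumes "i < n" "j < n" and z: "\<And>l. l < n \<Longrightarrow> z n l \<noteq> 0"
  shows "Mn n z U i j = Re (Pf n (wa n z) U i j) + Re (Qf n (wb n z) U i j)"
    "Mn n z U i (n+j) = Im (Pf n (wa n z) U i j) - Im (Qf n (wb n z) U i j)"
    "Mn n z U (n+i) j = - Im (Pf n (wa n z) U i j) - Im (Qf n (wb n z) U i j)"
    "Mn n z U (n+i) (n+j) = Re (Pf n (wa n z) U i j) - Re (Qf n (wb n z) U i j)"
proof -
  have E: "Mn n z U a c = (\<Sum>l<n. eta n U a l * Zhat n z l l * eta n U c l) + (\<Sum>l<n. eta n U a (n+l) * Zhat n z (n+l) (n+l) * eta n U c (n+l))"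
    if "a < 2*n" "c < 2*n" for a c
    using that by (simp only: Mn_entry sum_split2)
  have ii: "i < 2*n" "n+i < 2*n" "j < 2*n" "n+j < 2*n" using assms by auto
  have RP: "Re (Pf n w U i j) = (\<Sum>l<n. w l * (Re (U i l) * Re (U j l) + Im (U i l) * Im (U j l)))"
    "Im (Pf n w U i j) = (\<Sum>l<n. w l * (Im (U i l) * Re (U j l) - Re (U i l) * Im (U j l)))"
    "Re (Qf n w U i j) = (\<Sum>l<n. w l * (Re (U i l) * Re (U j l) - Im (U i l) * Im (U j l)))"
    "Im (Qf n w U i j) = (\<Sum>l<n. w l * (Im (U i l) * Re (U j l) + Re (U i l) * Im (U j l)))" for w
    unfolding Pf_def Qf_def by (simp_all add: Re_sum Im_sum algebra_simps)
  have W: "l < n \<Longrightarrow> Zhat n z l l = wa n z l + wb n z l" "l < n \<Longrightarrow> Zhat n z (n+l) (n+l) = wa n z l - wb n z l" for l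
    by (simp_all only: Zhat_simps) (simp_all add: wa_def wb_def field_simps)
  note S = eta_simps[OF assms(1)] eta_simps[OF assms(2)] W
  show "Mn n z U i j = Re (Pf n (wa n z) U i j) + Re (Qf n (wb n z) U i j)"
    unfolding E[OF ii(1) ii(3)] RP sum.distrib[symmetric]
    by (intro sum.cong refl) (simp only: lessThan_iff S, simp add: algebra_simps)
  show "Mn n z U i (n+j) = Im (Pf n (wa n z) U i j) - Im (Qf n (wb n z) U i j)"
    unfolding E[OF ii(1) ii(4)] RP sum.distrib[symmetric] sum_subtractf[symmetric]
    by (intro sum.cong refl) (simp only: lessThan_iff S, simp add: algebra_simps)
  show "Mn n z U (n+i) j = - Im (Pf n (wa n z) U i j) - Im (Qf n (wb n z) U i j)"
    unfolding E[OF ii(2) ii(3)] RP sum.distrib[symmetric] sum_subtractf[symmetric] sum_negf[symmetric]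
    by (intro sum.cong refl) (simp only: lessThan_iff S, simp add: algebra_simps)
  show "Mn n z U (n+i) (n+j) = Re (Pf n (wa n z) U i j) - Re (Qf n (wb n z) U i j)"
    unfolding E[OF ii(2) ii(4)] RP sum.distrib[symmetric] sum_subtractf[symmetric]
    by (intro sum.cong refl) (simp only: lessThan_iff S, simp add: algebra_simps)
qed

lemma Pf_swap: "Pf n w U j i = cnj (Pf n w U i j)"
  unfolding Pf_def by (simp add: mult.commute mult.left_commute)
lemma Qf_swap: "Qf n w U j i = Qf n w U i j"
  unfolding Qf_def by (simp add: mult.commute mult.left_commute)

lemma JN_entry: assumes "a < 2*k" "c < 2*k"
  shows "mmul (2*k) (Jmat k) N a c = (if a < k then - N (a+k) c else N (a-k) c)"
proof (cases "a < k")
  case True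
  have "(\<Sum>e<2*k. Jmat k a e * N e c) = Jmat k a (a+k) * N (a+k) c"
    using True by (subst sum.remove[where x="a+k"]) (auto simp: Jmat_def)
  then show ?thesis using True assms by (simp add: mmul_def Jmat_def)
next
  case False
  have "(\<Sum>e<2*k. Jmat k a e * N e c) = Jmat k a (a-k) * N (a-k) c"
    using False assms by (subst sum.remove[where x="a-k"]) (auto simp: Jmat_def split: if_splits intro!: sum.neutral)
  then show ?thesis using False assms by (simp add: mmul_def Jmat_def)
qed

lemma Mnk_simps: assumes "i < k" "j < k"
  shows "Mnk n k z U i j = Mn n z U i j" "Mnk n k z U i (k+j) = Mn n z U i (n+j)"
    "Mnk n k z U (k+i) j = Mn n z U (n+i) j" "Mnk n k z U (k+i) (k+j) = Mn n z U (n+i) (n+j)"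
  using assms by (auto simp: Mnk_def subidx_def)

lemma trace_identity:
  assumes kn: "k \<le> n" and z: "\<And>l. l < n \<Longrightarrow> z n l \<noteq> 0"
  shows "mtrace (2*k) (mmul (2*k) (mmul (2*k) (Jmat k) (Mnk n k z U)) (mmul (2*k) (Jmat k) (Mnk n k z U)))
    = (\<Sum>i<k. \<Sum>j<k. 2 * (cmod (Qf n (wb n z) U i j))\<^sup>2 - 2 * (cmod (Pf n (wa n z) U i j))\<^sup>2)"
proof -
  define N where "N = Mnk n k z U"
  define JN where "JN = mmul (2*k) (Jmat k) N"
  have tr: "mtrace (2*k) (mmul (2*k) JN JN) = (\<Sum>a<2*k. \<Sum>b<2*k. JN a b * JN b a)"
    unfolding mtrace_def mmul_def by simp
  have J1: "JN i j = - N (k+i) j" "JN i (k+j) = - N (k+i) (k+j)" "JN (k+i) j = N i j" "JN (k+i) (k+j) = N i (k+j)"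
    if "i < k" "j < k" for i j
    using that unfolding JN_def by (subst JN_entry; simp add: add.commute)+
  define A1 where "A1 i j = Re (Pf n (wa n z) U i j)" for i j
  define A2 where "A2 i j = Im (Pf n (wa n z) U i j)" for i j
  define B1 where "B1 i j = Re (Qf n (wb n z) U i j)" for i j
  define B2 where "B2 i j = Im (Qf n (wb n z) U i j)" for i j
  have sym: "A1 j i = A1 i j" "A2 j i = - A2 i j" "B1 j i = B1 i j" "B2 j i = B2 i j" for i j
    unfolding A1_def A2_def B1_def B2_def by (simp_all add: Pf_swap[of n _ U j i] Qf_swap[of n _ U j i])
  have NM: "N i j = A1 i j + B1 i j" "N i (k+j) = A2 i j - B2 i j" "N (k+i) j = - A2 i j - B2 i j"
     "N (k+i) (k+j) = A1 i j - B1 i j" if "i < k" "j < k" for i j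
    using that kn unfolding N_def A1_def A2_def B1_def B2_def
    by (simp_all add: Mnk_simps Mn_blocks z)
  have "(\<Sum>a<2*k. \<Sum>b<2*k. JN a b * JN b a) =
     (\<Sum>i<k. \<Sum>j<k. JN i j * JN j i + JN i (k+j) * JN (k+j) i + JN (k+i) j * JN j (k+i) + JN (k+i) (k+j) * JN (k+j) (k+i))"
    by (simp only: sum_split2 sum.distrib add.assoc)
  also have "\<dots> = (\<Sum>i<k. \<Sum>j<k. 2 * (cmod (Qf n (wb n z) U i j))\<^sup>2 - 2 * (cmod (Pf n (wa n z) U i j))\<^sup>2)"
  proof (intro sum.cong refl)
    fix i j assume "i \<in> {..<k}" "j \<in> {..<k}"
    then have ij: "i < k" "j < k" by auto
    have "JN i j * JN j i + JN i (k+j) * JN (k+j) i + JN (k+i) j * JN j (k+i) + JN (k+i) (k+j) * JN (k+j) (k+i)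
      = (- A2 i j - B2 i j) * (- A2 j i - B2 j i) - (A1 i j - B1 i j) * (A1 j i + B1 j i)
        - (A1 i j + B1 i j) * (A1 j i - B1 j i) + (A2 i j - B2 i j) * (A2 j i - B2 j i)"
      by (simp only: J1[OF ij] J1[OF ij(2) ij(1)] NM[OF ij] NM[OF ij(2) ij(1)])
    also have "\<dots> = 2 * ((B1 i j)\<^sup>2 + (B2 i j)\<^sup>2) - 2 * ((A1 i j)\<^sup>2 + (A2 i j)\<^sup>2)"
      by (simp add: sym[of i j] power2_eq_square algebra_simps)
    also have "\<dots> = 2 * (cmod (Qf n (wb n z) U i j))\<^sup>2 - 2 * (cmod (Pf n (wa n z) U i j))\<^sup>2"
      unfolding A1_def A2_def B1_def B2_def by (simp add: cmod_power2)
    finally show "JN i j * JN j i + JN i (k+j) * JN (k+j) i + JN (k+i) j * JN j (k+i) + JN (k+i) (k+j) * JN (k+j) (k+i)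
      = 2 * (cmod (Qf n (wb n z) U i j))\<^sup>2 - 2 * (cmod (Pf n (wa n z) U i j))\<^sup>2" .
  qed
  finally show ?thesis using tr unfolding JN_def N_def by simp
qed

lemma cont_entry[continuous_intros]: "continuous_on S (\<lambda>U::nat\<Rightarrow>nat\<Rightarrow>'a::topological_space. U i j)"
proof -
  have "continuous_on UNIV (\<lambda>U::nat\<Rightarrow>nat\<Rightarrow>'a. U i j)"
    using continuous_on_compose[OF continuous_on_product_coordinates[of i] continuous_on_subset[OF continuous_on_product_coordinates[of j]]]
    by (simp add: o_def)
  then show ?thesis by (rule continuous_on_subset) simp
qed

lemma cont_Pf[continuous_intros]: "continuous_on S (\<lambda>U. Pf n w U i j)"
  unfolding Pf_def by (intro continuous_intros)
lemma cont_Qf[continuous_intros]: "continuous_on S (\<lambda>U. Qf n w U i j)"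
  unfolding Qf_def by (intro continuous_intros)

lemma cont_mmul: "continuous_on S (\<lambda>U. mmul n (V::nat\<Rightarrow>nat\<Rightarrow>complex) U)"
proof (intro continuous_on_coordinatewise_then_product)
  fix i j
  show "continuous_on S (\<lambda>U. mmul n V U i j)"
  proof (cases "i < n \<and> j < n")
    case True
    have "continuous_on S (\<lambda>U. \<Sum>l<n. V i l * U l j)" by (intro continuous_intros)
    then show ?thesis using True by (simp add: mmul_def)
  next
    case False
    then have "(\<lambda>U. mmul n V U i j) = (\<lambda>U. 0)" unfolding mmul_def by auto
    then show ?thesis by (metis continuous_on_const)
  qed
qed

lemma unitary_orth: assumes "U \<in> unitary_group n" "j < n" "m < n"
  shows "(\<Sum>i<n. cnj (U i j) * U i m) = (if j = m then 1 else 0)"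
proof -
  have "mmul n (ctrans U) U j m = idm n j m" using assms(1) by (simp add: unitary_group_def)
  then show ?thesis using assms by (simp add: mmul_def ctrans_def idm_def)
qed

lemma unitary_orth': assumes "U \<in> unitary_group n" "j < n" "m < n"
  shows "(\<Sum>i<n. U i j * cnj (U i m)) = (if j = m then 1 else 0)"
proof -
  have "(\<Sum>i<n. U i j * cnj (U i m)) = cnj (\<Sum>i<n. cnj (U i j) * U i m)"
    by (simp add: mult.commute)
  then show ?thesis using unitary_orth[OF assms] by simp
qed

lemma unitary_zero: assumes "U \<in> unitary_group n" "\<not> (i < n \<and> j < n)" shows "U i j = 0"
  using assms by (auto simp: unitary_group_def)

lemma unitary_entry_le: assumes "U \<in> unitary_group n" shows "cmod (U i l) \<le> 1"
proof (cases "i < n \<and> l < n")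
  case True
  have "(\<Sum>i<n. cnj (U i l) * U i l) = complex_of_real (\<Sum>i<n. (cmod (U i l))\<^sup>2)"
    unfolding of_real_sum by (intro sum.cong refl) (simp only: complex_norm_square mult.commute)
  then have "(\<Sum>i<n. (cmod (U i l))\<^sup>2) = 1" using unitary_orth[OF assms, of l l] True
    by (metis of_real_eq_1_iff)
  moreover have "(cmod (U i l))\<^sup>2 \<le> (\<Sum>i<n. (cmod (U i l))\<^sup>2)"
    using True by (intro member_le_sum) auto
  ultimately have "(cmod (U i l))\<^sup>2 \<le> 1" by simp
  then show ?thesis by (simp add: power_le_one_iff)
next
  case False then show ?thesis using unitary_zero[OF assms] by simp
qed

lemma Pf_bound: assumes "U \<in> unitary_group n" shows "cmod (Pf n w U i j) \<le> (\<Sum>l<n. \<bar>w l\<bar>)"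
  unfolding Pf_def
proof (rule order_trans[OF norm_sum], rule sum_mono)
  fix l
  have "cmod (complex_of_real (w l) * U i l * cnj (U j l)) = \<bar>w l\<bar> * cmod (U i l) * cmod (U j l)"
    by (simp add: norm_mult)
  also have "\<dots> \<le> \<bar>w l\<bar> * 1 * 1"
    using unitary_entry_le[OF assms] by (intro mult_mono) auto
  finally show "cmod (complex_of_real (w l) * U i l * cnj (U j l)) \<le> \<bar>w l\<bar>" by simp
qed

lemma Qf_bound: assumes "U \<in> unitary_group n" shows "cmod (Qf n w U i j) \<le> (\<Sum>l<n. \<bar>w l\<bar>)"
  unfolding Qf_def
proof (rule order_trans[OF norm_sum], rule sum_mono)
  fix l
  have "cmod (complex_of_real (w l) * U i l * U j l) = \<bar>w l\<bar> * cmod (U i l) * cmod (U j l)"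
    by (simp add: norm_mult)
  also have "\<dots> \<le> \<bar>w l\<bar> * 1 * 1"
    using unitary_entry_le[OF assms] by (intro mult_mono) auto
  finally show "cmod (complex_of_real (w l) * U i l * U j l) \<le> \<bar>w l\<bar>" by simp
qed

locale haar_ctx =
  fixes n :: nat and \<mu> :: "(nat \<Rightarrow> nat \<Rightarrow> complex) measure"
  assumes haar: "haar_unitary n \<mu>"
begin

lemma prob: "prob_space \<mu>" and sets_eq: "sets \<mu> = sets borel"
  using haar by (auto simp: haar_unitary_def)

lemma AE_U: "AE U in \<mu>. U \<in> unitary_group n"
proof -
  have "emeasure \<mu> (unitary_group n) = 1" using haar by (simp add: haar_unitary_def)
  then have "measure \<mu> (unitary_group n) = 1" by (simp add: measure_def)
  then show ?thesis using prob_space.AE_prob_1[OF prob] by blast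
qed

lemma meas: "continuous_on UNIV f \<Longrightarrow> f \<in> borel_measurable \<mu>"
  using borel_measurable_continuous_onI measurable_cong_sets[OF sets_eq refl] by blast

lemma integ:
  fixes f :: "_ \<Rightarrow> real"
  assumes "continuous_on UNIV f" "\<And>U. U \<in> unitary_group n \<Longrightarrow> \<bar>f U\<bar> \<le> B"
  shows "integrable \<mu> f"
proof -
  interpret prob_space \<mu> by (rule prob)
  show ?thesis
    by (rule integrable_const_bound[where B=B]) (use AE_U assms in \<open>auto intro: meas\<close>)
qed

lemma int_const:
  fixes f :: "_ \<Rightarrow> real"
  assumes "continuous_on UNIV f" "\<And>U. U \<in> unitary_group n \<Longrightarrow> f U = c"
  shows "integral\<^sup>L \<mu> f = c"
proof -
  interpret prob_space \<mu> by (rule prob)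
  have "integral\<^sup>L \<mu> f = integral\<^sup>L \<mu> (\<lambda>_. c)"
    by (rule integral_cong_AE) (use AE_U assms in \<open>auto intro: meas\<close>)
  then show ?thesis by (simp add: prob_space)
qed

lemma inv:
  fixes f :: "_ \<Rightarrow> real"
  assumes V: "V \<in> unitary_group n" and f: "continuous_on UNIV f" and g: "\<And>U. f (mmul n V U) = g U"
  shows "integral\<^sup>L \<mu> g = integral\<^sup>L \<mu> f"
proof -
  have d: "distr \<mu> borel (mmul n V) = \<mu>" using haar V by (simp add: haar_unitary_def)
  have m: "mmul n V \<in> measurable \<mu> borel"
    using borel_measurable_continuous_onI[OF cont_mmul] measurable_cong_sets[OF sets_eq refl] by blast
  have "integral\<^sup>L \<mu> f = integral\<^sup>L (distr \<mu> borel (mmul n V)) f" using d by simp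
  also have "\<dots> = integral\<^sup>L \<mu> (\<lambda>U. f (mmul n V U))"
    by (rule integral_distr[OF m borel_measurable_continuous_onI[OF f]])
  finally show ?thesis using g by simp
qed

end

definition Gm :: "nat \<Rightarrow> nat \<Rightarrow> nat \<Rightarrow> complex \<Rightarrow> complex \<Rightarrow> complex \<Rightarrow> complex \<Rightarrow> nat \<Rightarrow> nat \<Rightarrow> complex" where
  "Gm n p q a b c d = (\<lambda>i m. if i < n \<and> m < n then
     (if i = p then (if m = p then a else if m = q then b else 0)
      else if i = q then (if m = p then c else if m = q then d else 0)
      else if i = m then 1 else 0) else 0)"

lemma Gm_row:
  assumes "p < n" "q < n" "p \<noteq> q" "i < n" "l < n"
  shows "mmul n (Gm n p q a b c d) U i l =
    (if i = p then a * U p l + b * U q l else if i = q then c * U p l + d * U q l else U i l)"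
proof -
  have "mmul n (Gm n p q a b c d) U i l = (\<Sum>m<n. Gm n p q a b c d i m * U m l)"
    using assms by (simp add: mmul_def)
  also have "\<dots> = (\<Sum>m<n. (if m = p then (if i = p then a else if i = q then c else 0) * U p l else 0)
       + (if m = q then (if i = p then b else if i = q then d else 0) * U q l else 0)
       + (if m = i \<and> i \<noteq> p \<and> i \<noteq> q then U i l else 0))"
    using assms by (intro sum.cong refl) (auto simp: Gm_def)
  also have "\<dots> = (if i = p then a * U p l + b * U q l else if i = q then c * U p l + d * U q l else U i l)"
    using assms by (simp add: sum.distrib sum.delta)
  finally show ?thesis .
qed

lemma Gm_unitary:
  assumes pq: "p < n" "q < n" "p \<noteq> q"
    and h1: "cnj a * a + cnj c * c = 1" and h2: "cnj b * b + cnj d * d = 1" and h3: "cnj a * b + cnj c * d = 0"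
  shows "Gm n p q a b c d \<in> unitary_group n"
proof -
  let ?G = "Gm n p q a b c d"
  have h3': "cnj b * a + cnj d * c = 0"
  proof -
    have "cnj (cnj a * b + cnj c * d) = 0" using h3 by simp
    then show ?thesis by (simp add: mult.commute)
  qed
  have "mmul n (ctrans ?G) ?G j m = idm n j m" for j m
  proof (cases "j < n \<and> m < n")
    case False then show ?thesis by (auto simp: mmul_def idm_def)
  next
    case True
    have "mmul n (ctrans ?G) ?G j m = (\<Sum>i<n. cnj (?G i j) * ?G i m)"
      using True by (simp add: mmul_def ctrans_def)
    also have "\<dots> = (\<Sum>i<n. (if i = p then cnj (?G p j) * ?G p m else 0) + (if i = q then cnj (?G q j) * ?G q m else 0)
        + (if i = j then (if j = m \<and> j \<noteq> p \<and> j \<noteq> q then 1 else 0) else 0))"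
      using True pq by (intro sum.cong refl) (auto simp: Gm_def)
    also have "\<dots> = cnj (?G p j) * ?G p m + cnj (?G q j) * ?G q m + (if j = m \<and> j \<noteq> p \<and> j \<noteq> q then 1 else 0)"
      using True pq by (simp add: sum.distrib sum.delta)
    also have "\<dots> = idm n j m"
      using True pq h1 h2 h3 h3' by (auto simp: Gm_def idm_def)
    finally show ?thesis .
  qed
  moreover have "\<forall>i j. (n \<le> i \<or> n \<le> j) \<longrightarrow> ?G i j = 0" by (auto simp: Gm_def)
  ultimately show ?thesis by (auto simp: unitary_group_def)
qed

lemma Pf_rows:
  assumes "\<And>l. l < n \<Longrightarrow> U' i l = \<alpha> * U p l + \<beta> * U q l"
    "\<And>l. l < n \<Longrightarrow> U' j l = \<gamma> * U p l + \<delta> * U q l"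
  shows "Pf n w U' i j = \<alpha> * cnj \<gamma> * Pf n w U p p + \<alpha> * cnj \<delta> * Pf n w U p q
     + \<beta> * cnj \<gamma> * Pf n w U q p + \<beta> * cnj \<delta> * Pf n w U q q"
proof -
  have "Pf n w U' i j = (\<Sum>l<n. \<alpha> * cnj \<gamma> * (complex_of_real (w l) * U p l * cnj (U p l))
     + \<alpha> * cnj \<delta> * (complex_of_real (w l) * U p l * cnj (U q l))
     + \<beta> * cnj \<gamma> * (complex_of_real (w l) * U q l * cnj (U p l))
     + \<beta> * cnj \<delta> * (complex_of_real (w l) * U q l * cnj (U q l)))"
    unfolding Pf_def by (intro sum.cong refl) (simp add: assms algebra_simps)
  then show ?thesis by (simp add: sum.distrib sum_distrib_left[symmetric] Pf_def)
qed

lemma Qf_rows: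
  assumes "\<And>l. l < n \<Longrightarrow> U' i l = \<alpha> * U p l + \<beta> * U q l"
    "\<And>l. l < n \<Longrightarrow> U' j l = \<gamma> * U p l + \<delta> * U q l"
  shows "Qf n w U' i j = \<alpha> * \<gamma> * Qf n w U p p + \<alpha> * \<delta> * Qf n w U p q
     + \<beta> * \<gamma> * Qf n w U q p + \<beta> * \<delta> * Qf n w U q q"
proof -
  have "Qf n w U' i j = (\<Sum>l<n. \<alpha> * \<gamma> * (complex_of_real (w l) * U p l * U p l)
     + \<alpha> * \<delta> * (complex_of_real (w l) * U p l * U q l)
     + \<beta> * \<gamma> * (complex_of_real (w l) * U q l * U p l)
     + \<beta> * \<delta> * (complex_of_real (w l) * U q l * U q l))"
    unfolding Qf_def by (intro sum.cong refl) (simp add: assms algebra_simps)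
  then show ?thesis by (simp add: sum.distrib sum_distrib_left[symmetric] Qf_def)
qed

lemma Pf_rows1:
  assumes "\<And>l. l < n \<Longrightarrow> U' i l = U i' l" "\<And>l. l < n \<Longrightarrow> U' j l = U j' l"
  shows "Pf n w U' i j = Pf n w U i' j'" "Qf n w U' i j = Qf n w U i' j'"
  unfolding Pf_def Qf_def using assms by (auto intro!: sum.cong)

lemma pars1:
  assumes "U \<in> unitary_group n"
  shows "(\<Sum>j<n. (\<Sum>l<n. x l * cnj (U j l)) * (\<Sum>m<n. y m * U j m)) = (\<Sum>l<n. x l * y l)"
proof -
  have "(\<Sum>j<n. (\<Sum>l<n. x l * cnj (U j l)) * (\<Sum>m<n. y m * U j m))
      = (\<Sum>j<n. \<Sum>l<n. \<Sum>m<n. x l * y m * (cnj (U j l) * U j m))"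
    unfolding sum_product by (intro sum.cong refl) (simp only: mult_ac)
  also have "\<dots> = (\<Sum>l<n. \<Sum>j<n. \<Sum>m<n. x l * y m * (cnj (U j l) * U j m))"
    by (rule sum.swap)
  also have "\<dots> = (\<Sum>l<n. \<Sum>m<n. \<Sum>j<n. x l * y m * (cnj (U j l) * U j m))"
    by (rule sum.cong[OF refl], rule sum.swap)
  also have "\<dots> = (\<Sum>l<n. \<Sum>m<n. x l * y m * (\<Sum>j<n. cnj (U j l) * U j m))"
    by (simp only: sum_distrib_left)
  also have "\<dots> = (\<Sum>l<n. \<Sum>m<n. (if l = m then x l * y l else 0))"
    using unitary_orth[OF assms] by (intro sum.cong refl) simp
  also have "\<dots> = (\<Sum>l<n. x l * y l)"
    by (intro sum.cong refl) (simp only: sum.delta' finite_lessThan, simp)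
  finally show ?thesis .
qed

lemma pars2:
  assumes "U \<in> unitary_group n"
  shows "(\<Sum>j<n. (\<Sum>l<n. x l * U j l) * (\<Sum>m<n. y m * cnj (U j m))) = (\<Sum>l<n. x l * y l)"
proof -
  have "(\<Sum>j<n. (\<Sum>l<n. x l * U j l) * (\<Sum>m<n. y m * cnj (U j m)))
     = cnj (\<Sum>j<n. (\<Sum>l<n. cnj (x l) * cnj (U j l)) * (\<Sum>m<n. cnj (y m) * U j m))"
    by simp
  also have "\<dots> = cnj (\<Sum>l<n. cnj (x l) * cnj (y l))" by (simp only: pars1[OF assms])
  finally show ?thesis by simp
qed

lemma Pf_trace:
  assumes "U \<in> unitary_group n"
  shows "(\<Sum>i<n. Re (Pf n w U i i)) = (\<Sum>l<n. w l)"
proof -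
  have "(\<Sum>i<n. Pf n w U i i) = (\<Sum>i<n. \<Sum>l<n. complex_of_real (w l) * (U i l * cnj (U i l)))"
    unfolding Pf_def by (simp only: mult.assoc)
  also have "\<dots> = (\<Sum>l<n. \<Sum>i<n. complex_of_real (w l) * (U i l * cnj (U i l)))"
    by (rule sum.swap)
  also have "\<dots> = (\<Sum>l<n. complex_of_real (w l) * (\<Sum>i<n. U i l * cnj (U i l)))"
    by (simp only: sum_distrib_left)
  also have "\<dots> = (\<Sum>l<n. complex_of_real (w l))"
    using unitary_orth'[OF assms] by (intro sum.cong refl) simp
  finally have "Re (\<Sum>i<n. Pf n w U i i) = Re (\<Sum>l<n. complex_of_real (w l))" by (rule arg_cong)
  then show ?thesis by simp
qed

lemma Pf_sq:
  assumes "U \<in> unitary_group n"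
  shows "(\<Sum>i<n. \<Sum>j<n. (cmod (Pf n w U i j))\<^sup>2) = (\<Sum>l<n. (w l)\<^sup>2)"
proof -
  have "complex_of_real (\<Sum>i<n. \<Sum>j<n. (cmod (Pf n w U i j))\<^sup>2) = (\<Sum>i<n. \<Sum>j<n. Pf n w U i j * cnj (Pf n w U i j))"
    by (simp only: of_real_sum complex_norm_square)
  also have "\<dots> = (\<Sum>i<n. \<Sum>j<n. (\<Sum>l<n. (complex_of_real (w l) * U i l) * cnj (U j l)) * (\<Sum>m<n. (complex_of_real (w m) * cnj (U i m)) * U j m))"
    unfolding Pf_def by (simp add: mult.assoc)
  also have "\<dots> = (\<Sum>i<n. \<Sum>l<n. (complex_of_real (w l) * U i l) * (complex_of_real (w l) * cnj (U i l)))"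
    by (simp only: pars1[OF assms])
  also have "\<dots> = (\<Sum>i<n. \<Sum>l<n. complex_of_real ((w l)\<^sup>2) * (U i l * cnj (U i l)))"
    by (intro sum.cong refl) (simp add: power2_eq_square mult_ac)
  also have "\<dots> = (\<Sum>l<n. \<Sum>i<n. complex_of_real ((w l)\<^sup>2) * (U i l * cnj (U i l)))"
    by (rule sum.swap)
  also have "\<dots> = (\<Sum>l<n. complex_of_real ((w l)\<^sup>2) * (\<Sum>i<n. U i l * cnj (U i l)))"
    by (simp only: sum_distrib_left)
  also have "\<dots> = (\<Sum>l<n. complex_of_real ((w l)\<^sup>2))"
    using unitary_orth'[OF assms] by (intro sum.cong refl) simp
  also have "\<dots> = complex_of_real (\<Sum>l<n. (w l)\<^sup>2)"
    by (simp only: of_real_sum)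
  finally show ?thesis using of_real_eq_iff by blast
qed

lemma Qf_sq:
  assumes "U \<in> unitary_group n"
  shows "(\<Sum>i<n. \<Sum>j<n. (cmod (Qf n w U i j))\<^sup>2) = (\<Sum>l<n. (w l)\<^sup>2)"
proof -
  have "complex_of_real (\<Sum>i<n. \<Sum>j<n. (cmod (Qf n w U i j))\<^sup>2) = (\<Sum>i<n. \<Sum>j<n. Qf n w U i j * cnj (Qf n w U i j))"
    by (simp only: of_real_sum complex_norm_square)
  also have "\<dots> = (\<Sum>i<n. \<Sum>j<n. (\<Sum>l<n. (complex_of_real (w l) * U i l) * U j l) * (\<Sum>m<n. (complex_of_real (w m) * cnj (U i m)) * cnj (U j m)))"
    unfolding Qf_def by (simp add: mult.assoc)
  also have "\<dots> = (\<Sum>i<n. \<Sum>l<n. (complex_of_real (w l) * U i l) * (complex_of_real (w l) * cnj (U i l)))"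
    by (simp only: pars2[OF assms])
  also have "\<dots> = (\<Sum>i<n. \<Sum>l<n. complex_of_real ((w l)\<^sup>2) * (U i l * cnj (U i l)))"
    by (intro sum.cong refl) (simp add: power2_eq_square mult_ac)
  also have "\<dots> = (\<Sum>l<n. \<Sum>i<n. complex_of_real ((w l)\<^sup>2) * (U i l * cnj (U i l)))"
    by (rule sum.swap)
  also have "\<dots> = (\<Sum>l<n. complex_of_real ((w l)\<^sup>2) * (\<Sum>i<n. U i l * cnj (U i l)))"
    by (simp only: sum_distrib_left)
  also have "\<dots> = (\<Sum>l<n. complex_of_real ((w l)\<^sup>2))"
    using unitary_orth'[OF assms] by (intro sum.cong refl) simp
  also have "\<dots> = complex_of_real (\<Sum>l<n. (w l)\<^sup>2)"
    by (simp only: of_real_sum)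
  finally show ?thesis using of_real_eq_iff by blast
qed

definition sig :: "nat \<Rightarrow> nat \<Rightarrow> nat \<Rightarrow> nat" where
  "sig p q i = (if i = p then q else if i = q then p else i)"

lemma Gm_rows:
  assumes "p < n" "q < n" "p \<noteq> q" "l < n"
  shows "mmul n (Gm n p q a b c d) U p l = a * U p l + b * U q l"
    "mmul n (Gm n p q a b c d) U q l = c * U p l + d * U q l"
  using Gm_row[OF assms(1-3) _ assms(4)] assms by auto

lemma Sw_rows:
  assumes "p < n" "q < n" "p \<noteq> q" "i < n" "l < n"
  shows "mmul n (Gm n p q 0 1 1 0) U i l = U (sig p q i) l"
  using Gm_row[OF assms] by (auto simp: sig_def)

lemma Sw_unitary: "p < n \<Longrightarrow> q < n \<Longrightarrow> p \<noteq> q \<Longrightarrow> Gm n p q 0 1 1 0 \<in> unitary_group n"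
  by (rule Gm_unitary) auto

lemma Gi_unitary: "p < n \<Longrightarrow> q < n \<Longrightarrow> p \<noteq> q \<Longrightarrow> Gm n p q \<i> 0 0 1 \<in> unitary_group n"
  by (rule Gm_unitary) auto

definition rr :: complex where "rr = complex_of_real (sqrt (1/2))"

lemma rr_sq: "rr * rr = 1/2" "cnj rr = rr"
proof -
  have "sqrt (1/2) * sqrt (1/2) = (1/2::real)" by (simp add: real_sqrt_mult[symmetric])
  then have "complex_of_real (sqrt (1/2) * sqrt (1/2)) = 1/2" by simp
  then show "rr * rr = 1/2" by (simp only: rr_def of_real_mult[symmetric])
  show "cnj rr = rr" by (simp add: rr_def)
qed

lemma Gp_unitary: "p < n \<Longrightarrow> q < n \<Longrightarrow> p \<noteq> q \<Longrightarrow> Gm n p q rr rr (-rr) rr \<in> unitary_group n"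
  by (rule Gm_unitary) (auto simp: rr_sq)

lemma Gn_unitary: "p < n \<Longrightarrow> q < n \<Longrightarrow> p \<noteq> q \<Longrightarrow> Gm n p q rr (-rr) rr rr \<in> unitary_group n"
  by (rule Gm_unitary) (auto simp: rr_sq)

lemma sum_if_diag:
  "(\<Sum>i<m. \<Sum>j<m. if i = j then x else y) = real m * x + (real m * real m - real m) * (y::real)"
proof -
  have "(\<Sum>j<m. if i = j then x else y) = x + (real m - 1) * y" if "i < m" for i
  proof -
    have "(\<Sum>j<m. if i = j then x else y) = (\<Sum>j<m. (if i = j then x - y else 0) + y)"
      by (intro sum.cong refl) auto
    also have "\<dots> = (x - y) + real m * y" using that by (simp add: sum.distrib)
    finally show ?thesis by (simp add: algebra_simps)
  qed
  then have "(\<Sum>i<m. \<Sum>j<m. if i = j then x else y) = (\<Sum>i<m. x + (real m - 1) * y)"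
    by (intro sum.cong refl) auto
  also have "\<dots> = real m * x + (real m * real m - real m) * y" by (simp add: algebra_simps)
  finally show ?thesis .
qed

context haar_ctx
begin

definition EP where "EP w i j = integral\<^sup>L \<mu> (\<lambda>U. (cmod (Pf n w U i j))\<^sup>2)"
definition EQ where "EQ w i j = integral\<^sup>L \<mu> (\<lambda>U. (cmod (Qf n w U i j))\<^sup>2)"
definition ED where "ED w i j = integral\<^sup>L \<mu> (\<lambda>U. Re (Pf n w U i i) * Re (Pf n w U j j))"

abbreviation "WW w \<equiv> (\<Sum>l<n. \<bar>w l\<bar>)"

lemma bnds:
  assumes "U \<in> unitary_group n"
  shows "\<bar>Re (Pf n w U i j)\<bar> \<le> WW w" "\<bar>Im (Pf n w U i j)\<bar> \<le> WW w" "cmod (Pf n w U i j) \<le> WW w"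
    "cmod (Qf n w U i j) \<le> WW w"
  using Pf_bound[OF assms] Qf_bound[OF assms] abs_Re_le_cmod abs_Im_le_cmod
  by (meson order_trans)+

lemma int_RR: "integrable \<mu> (\<lambda>U. Re (Pf n w U i j) * Re (Pf n w U p q))"
proof (rule integ[where B="WW w * WW w"])
  show "continuous_on UNIV (\<lambda>U. Re (Pf n w U i j) * Re (Pf n w U p q))" by (intro continuous_intros)
  fix U assume "U \<in> unitary_group n"
  then show "\<bar>Re (Pf n w U i j) * Re (Pf n w U p q)\<bar> \<le> WW w * WW w"
    unfolding abs_mult by (intro mult_mono bnds) auto
qed

lemma int_II: "integrable \<mu> (\<lambda>U. Im (Pf n w U i j) * Im (Pf n w U p q))"
proof (rule integ[where B="WW w * WW w"])
  show "continuous_on UNIV (\<lambda>U. Im (Pf n w U i j) * Im (Pf n w U p q))" by (intro continuous_intros)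
  fix U assume "U \<in> unitary_group n"
  then show "\<bar>Im (Pf n w U i j) * Im (Pf n w U p q)\<bar> \<le> WW w * WW w"
    unfolding abs_mult by (intro mult_mono bnds) auto
qed

lemma int_cP: "integrable \<mu> (\<lambda>U. (cmod (Pf n w U i j))\<^sup>2)"
proof (rule integ[where B="WW w * WW w"])
  show "continuous_on UNIV (\<lambda>U. (cmod (Pf n w U i j))\<^sup>2)" by (intro continuous_intros)
  fix U assume "U \<in> unitary_group n"
  then show "\<bar>(cmod (Pf n w U i j))\<^sup>2\<bar> \<le> WW w * WW w"
    unfolding power2_eq_square abs_mult by (intro mult_mono) (auto intro: bnds)
qed

lemma int_cQ: "integrable \<mu> (\<lambda>U. (cmod (Qf n w U i j))\<^sup>2)"
proof (rule integ[where B="WW w * WW w"])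
  show "continuous_on UNIV (\<lambda>U. (cmod (Qf n w U i j))\<^sup>2)" by (intro continuous_intros)
  fix U assume "U \<in> unitary_group n"
  then show "\<bar>(cmod (Qf n w U i j))\<^sup>2\<bar> \<le> WW w * WW w"
    unfolding power2_eq_square abs_mult by (intro mult_mono) (auto intro: bnds)
qed

lemma int_QR: "integrable \<mu> (\<lambda>U. Re (Qf n w U i j * cnj (Qf n w U p q)))"
proof (rule integ[where B="WW w * WW w"])
  show "continuous_on UNIV (\<lambda>U. Re (Qf n w U i j * cnj (Qf n w U p q)))" by (intro continuous_intros)
  fix U assume U: "U \<in> unitary_group n"
  have "\<bar>Re (Qf n w U i j * cnj (Qf n w U p q))\<bar> \<le> cmod (Qf n w U i j * cnj (Qf n w U p q))"
    by (rule abs_Re_le_cmod)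
  also have "\<dots> = cmod (Qf n w U i j) * cmod (Qf n w U p q)" by (simp add: norm_mult)
  also have "\<dots> \<le> WW w * WW w" using U by (intro mult_mono bnds) auto
  finally show "\<bar>Re (Qf n w U i j * cnj (Qf n w U p q))\<bar> \<le> WW w * WW w" .
qed

lemma EP_swap:
  assumes "p < n" "q < n" "p \<noteq> q" "i < n" "j < n"
  shows "EP w (sig p q i) (sig p q j) = EP w i j"
  unfolding EP_def
proof (rule inv[OF Sw_unitary[OF assms(1-3)]])
  show "continuous_on UNIV (\<lambda>U. (cmod (Pf n w U i j))\<^sup>2)" by (intro continuous_intros)
  fix U show "(cmod (Pf n w (mmul n (Gm n p q 0 1 1 0) U) i j))\<^sup>2 = (cmod (Pf n w U (sig p q i) (sig p q j)))\<^sup>2"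
    using Pf_rows1(1)[of n _ i U "sig p q i" j "sig p q j" w] Sw_rows[OF assms(1-3)] assms(4,5) by simp
qed

lemma EQ_swap:
  assumes "p < n" "q < n" "p \<noteq> q" "i < n" "j < n"
  shows "EQ w (sig p q i) (sig p q j) = EQ w i j"
  unfolding EQ_def
proof (rule inv[OF Sw_unitary[OF assms(1-3)]])
  show "continuous_on UNIV (\<lambda>U. (cmod (Qf n w U i j))\<^sup>2)" by (intro continuous_intros)
  fix U show "(cmod (Qf n w (mmul n (Gm n p q 0 1 1 0) U) i j))\<^sup>2 = (cmod (Qf n w U (sig p q i) (sig p q j)))\<^sup>2"
    using Pf_rows1(2)[of n _ i U "sig p q i" j "sig p q j" w] Sw_rows[OF assms(1-3)] assms(4,5) by simp
qed

lemma const_gen: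
  fixes E :: "nat \<Rightarrow> nat \<Rightarrow> real"
  assumes sw: "\<And>p q i j. p < n \<Longrightarrow> q < n \<Longrightarrow> p \<noteq> q \<Longrightarrow> i < n \<Longrightarrow> j < n \<Longrightarrow> E (sig p q i) (sig p q j) = E i j"
    and n2: "2 \<le> n"
  shows "\<And>i. i < n \<Longrightarrow> E i i = E 0 0"
    "\<And>i j. i < n \<Longrightarrow> j < n \<Longrightarrow> i \<noteq> j \<Longrightarrow> E i j = E 0 1"
proof -
  fix i assume i: "i < n"
  show "E i i = E 0 0"
  proof (cases "i = 0")
    case False
    have "E (sig 0 i i) (sig 0 i i) = E i i" using sw[of 0 i i i] i False by auto
    then show ?thesis using False by (simp add: sig_def)
  qed simp
next
  fix i j assume ij: "i < n" "j < n" "i \<noteq> j"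
  define j' where "j' = (if j = 0 then i else j)"
  have j': "j' < n" "j' \<noteq> 0" "E i j = E 0 j'"
  proof -
    show "j' < n" "j' \<noteq> 0" using ij by (auto simp: j'_def)
    show "E i j = E 0 j'"
    proof (cases "i = 0")
      case True then show ?thesis using ij by (simp add: j'_def)
    next
      case False
      have "E (sig 0 i i) (sig 0 i j) = E i j" using sw[of 0 i i j] ij False by auto
      then show ?thesis using ij False by (auto simp: sig_def j'_def)
    qed
  qed
  show "E i j = E 0 1"
  proof (cases "j' = 1")
    case True then show ?thesis using j' by simp
  next
    case False
    have "E (sig 1 j' 0) (sig 1 j' j') = E 0 j'" using sw[of 1 j' 0 j'] j' n2 False by auto
    then show ?thesis using j' False by (simp add: sig_def)
  qed
qed

end

lemma Im_Pf_diag: "Im (Pf n w U i i) = 0"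
proof -
  have "Pf n w U i i = cnj (Pf n w U i i)" by (rule Pf_swap)
  then have "Im (Pf n w U i i) = Im (cnj (Pf n w U i i))" by (rule arg_cong)
  then show ?thesis by simp
qed

lemma Gp_Pf:
  assumes "p < n" "q < n" "p \<noteq> q"
  shows "Re (Pf n w (mmul n (Gm n p q rr rr (-rr) rr) U) p p) = (Re (Pf n w U p p) + Re (Pf n w U q q)) / 2 + Re (Pf n w U p q)"
proof -
  have "Pf n w (mmul n (Gm n p q rr rr (-rr) rr) U) p p = rr * cnj rr * Pf n w U p p + rr * cnj rr * Pf n w U p q
     + rr * cnj rr * Pf n w U q p + rr * cnj rr * Pf n w U q q"
    by (rule Pf_rows) (simp_all add: Gm_rows assms)
  then show ?thesis by (simp add: rr_sq Pf_swap[of n w U q p])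
qed

lemma Gn_Pf:
  assumes "p < n" "q < n" "p \<noteq> q"
  shows "Re (Pf n w (mmul n (Gm n p q rr (-rr) rr rr) U) p p) = (Re (Pf n w U p p) + Re (Pf n w U q q)) / 2 - Re (Pf n w U p q)"
proof -
  have "Pf n w (mmul n (Gm n p q rr (-rr) rr rr) U) p p = rr * cnj rr * Pf n w U p p + rr * cnj (-rr) * Pf n w U p q
     + (-rr) * cnj rr * Pf n w U q p + (-rr) * cnj (-rr) * Pf n w U q q"
    by (rule Pf_rows) (simp_all add: Gm_rows assms)
  then show ?thesis by (simp add: rr_sq Pf_swap[of n w U q p])
qed

lemma Gi_Pf:
  assumes "p < n" "q < n" "p \<noteq> q"
  shows "Re (Pf n w (mmul n (Gm n p q \<i> 0 0 1) U) p q) = - Im (Pf n w U p q)"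
proof -
  have "Pf n w (mmul n (Gm n p q \<i> 0 0 1) U) p q = \<i> * cnj 0 * Pf n w U p p + \<i> * cnj 1 * Pf n w U p q
     + 0 * cnj 0 * Pf n w U q p + 0 * cnj 1 * Pf n w U q q"
    by (rule Pf_rows) (simp_all add: Gm_rows assms)
  then show ?thesis by simp
qed

lemma Gp_Qf:
  assumes "p < n" "q < n" "p \<noteq> q"
  shows "Qf n w (mmul n (Gm n p q rr rr (-rr) rr) U) p p = (1/2) * Qf n w U p p + Qf n w U p q + (1/2) * Qf n w U q q"
proof -
  have "Qf n w (mmul n (Gm n p q rr rr (-rr) rr) U) p p = rr * rr * Qf n w U p p + rr * rr * Qf n w U p q
     + rr * rr * Qf n w U q p + rr * rr * Qf n w U q q"
    by (rule Qf_rows) (simp_all add: Gm_rows assms)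
  then show ?thesis by (auto simp: rr_sq Qf_swap[of n w U q p] complex_eq_iff)
qed

lemma Gn_Qf:
  assumes "p < n" "q < n" "p \<noteq> q"
  shows "Qf n w (mmul n (Gm n p q rr (-rr) rr rr) U) p p = (1/2) * Qf n w U p p - Qf n w U p q + (1/2) * Qf n w U q q"
proof -
  have "Qf n w (mmul n (Gm n p q rr (-rr) rr rr) U) p p = rr * rr * Qf n w U p p + rr * (-rr) * Qf n w U p q
     + (-rr) * rr * Qf n w U q p + (-rr) * (-rr) * Qf n w U q q"
    by (rule Qf_rows) (simp_all add: Gm_rows assms)
  then show ?thesis by (auto simp: rr_sq Qf_swap[of n w U q p] complex_eq_iff)
qed

lemma Gi_Qf:
  assumes "p < n" "q < n" "p \<noteq> q"
  shows "Qf n w (mmul n (Gm n p q \<i> 0 0 1) U) p p = - Qf n w U p p"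
    "Qf n w (mmul n (Gm n p q \<i> 0 0 1) U) q q = Qf n w U q q"
proof -
  have "Qf n w (mmul n (Gm n p q \<i> 0 0 1) U) p p = \<i> * \<i> * Qf n w U p p + \<i> * 0 * Qf n w U p q
     + 0 * \<i> * Qf n w U q p + 0 * 0 * Qf n w U q q"
    by (rule Qf_rows) (simp_all add: Gm_rows assms)
  then show "Qf n w (mmul n (Gm n p q \<i> 0 0 1) U) p p = - Qf n w U p p" by simp
  have "Qf n w (mmul n (Gm n p q \<i> 0 0 1) U) q q = 0 * 0 * Qf n w U p p + 0 * 1 * Qf n w U p q
     + 1 * 0 * Qf n w U q p + 1 * 1 * Qf n w U q q"
    by (rule Qf_rows) (simp_all add: Gm_rows assms)
  then show "Qf n w (mmul n (Gm n p q \<i> 0 0 1) U) q q = Qf n w U q q" by simp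
qed

context haar_ctx
begin

lemma EP_diag: "EP w i i = integral\<^sup>L \<mu> (\<lambda>U. Re (Pf n w U i i) * Re (Pf n w U i i))"
  unfolding EP_def by (intro Bochner_Integration.integral_cong refl) (simp only: cmod_power2 Im_Pf_diag, simp add: power2_eq_square)

lemma EP_off: "EP w i j = integral\<^sup>L \<mu> (\<lambda>U. Re (Pf n w U i j) * Re (Pf n w U i j)) + integral\<^sup>L \<mu> (\<lambda>U. Im (Pf n w U i j) * Im (Pf n w U i j))"
proof -
  have "EP w i j = integral\<^sup>L \<mu> (\<lambda>U. Re (Pf n w U i j) * Re (Pf n w U i j) + Im (Pf n w U i j) * Im (Pf n w U i j))"
    unfolding EP_def by (intro Bochner_Integration.integral_cong refl) (simp only: cmod_power2, simp add: power2_eq_square)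
  then show ?thesis by (simp only: Bochner_Integration.integral_add int_RR int_II)
qed

lemma rotP:
  assumes pq: "p < n" "q < n" "p \<noteq> q"
  shows "2 * EP w p p = (EP w p p + EP w q q) / 2 + ED w p q + EP w p q"
proof -
  define D where "D U = Re (Pf n w U p p)" for U
  define E where "E U = Re (Pf n w U q q)" for U
  define X where "X U = Re (Pf n w U p q)" for U
  define Y where "Y U = Im (Pf n w U p q)" for U
  note defs = D_def E_def X_def Y_def
  have fp: "integral\<^sup>L \<mu> (\<lambda>U. ((D U + E U) / 2 + X U) * ((D U + E U) / 2 + X U)) = integral\<^sup>L \<mu> (\<lambda>U. D U * D U)"
    by (rule inv[OF Gp_unitary[OF pq]]) (simp_all add: defs Gp_Pf[OF pq] continuous_intros)
  have fm: "integral\<^sup>L \<mu> (\<lambda>U. ((D U + E U) / 2 - X U) * ((D U + E U) / 2 - X U)) = integral\<^sup>L \<mu> (\<lambda>U. D U * D U)"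
    by (rule inv[OF Gn_unitary[OF pq]]) (simp_all add: defs Gn_Pf[OF pq] continuous_intros)
  have fi: "integral\<^sup>L \<mu> (\<lambda>U. Y U * Y U) = integral\<^sup>L \<mu> (\<lambda>U. X U * X U)"
    by (rule inv[OF Gi_unitary[OF pq]]) (simp_all add: defs Gi_Pf[OF pq] continuous_intros)
  have i1: "integral\<^sup>L \<mu> (\<lambda>U. ((D U + E U) / 2 + X U) * ((D U + E U) / 2 + X U)) =
     integral\<^sup>L \<mu> (\<lambda>U. (1/4) * (D U * D U) + (1/4) * (E U * E U) + (1/2) * (D U * E U) + D U * X U + E U * X U + X U * X U)"
    by (intro Bochner_Integration.integral_cong refl) (simp add: field_simps)
  have i1b: "integral\<^sup>L \<mu> (\<lambda>U. (1/4) * (D U * D U) + (1/4) * (E U * E U) + (1/2) * (D U * E U) + D U * X U + E U * X U + X U * X U) = (1/4) * integral\<^sup>L \<mu> (\<lambda>U. D U * D U) + (1/4) * integral\<^sup>L \<mu> (\<lambda>U. E U * E U)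
     + (1/2) * integral\<^sup>L \<mu> (\<lambda>U. D U * E U) + integral\<^sup>L \<mu> (\<lambda>U. D U * X U) + integral\<^sup>L \<mu> (\<lambda>U. E U * X U)
     + integral\<^sup>L \<mu> (\<lambda>U. X U * X U)"
    unfolding defs by (simp only: Bochner_Integration.integral_add Bochner_Integration.integral_mult_right_zero Bochner_Integration.integrable_add Bochner_Integration.integrable_mult_right int_RR)
  have i2: "integral\<^sup>L \<mu> (\<lambda>U. ((D U + E U) / 2 - X U) * ((D U + E U) / 2 - X U)) =
     integral\<^sup>L \<mu> (\<lambda>U. (1/4) * (D U * D U) + (1/4) * (E U * E U) + (1/2) * (D U * E U) + (-1) * (D U * X U) + (-1) * (E U * X U) + X U * X U)"
    by (intro Bochner_Integration.integral_cong refl) (simp add: field_simps)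
  have i2b: "integral\<^sup>L \<mu> (\<lambda>U. (1/4) * (D U * D U) + (1/4) * (E U * E U) + (1/2) * (D U * E U) + (-1) * (D U * X U) + (-1) * (E U * X U) + X U * X U) = (1/4) * integral\<^sup>L \<mu> (\<lambda>U. D U * D U) + (1/4) * integral\<^sup>L \<mu> (\<lambda>U. E U * E U)
     + (1/2) * integral\<^sup>L \<mu> (\<lambda>U. D U * E U) + (-1) * integral\<^sup>L \<mu> (\<lambda>U. D U * X U) + (-1) * integral\<^sup>L \<mu> (\<lambda>U. E U * X U)
     + integral\<^sup>L \<mu> (\<lambda>U. X U * X U)"
    unfolding defs by (simp only: Bochner_Integration.integral_add Bochner_Integration.integral_mult_right_zero Bochner_Integration.integrable_add Bochner_Integration.integrable_mult_right int_RR)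
  have ep: "EP w p q = integral\<^sup>L \<mu> (\<lambda>U. X U * X U) + integral\<^sup>L \<mu> (\<lambda>U. Y U * Y U)"
    unfolding defs by (rule EP_off)
  have epp: "EP w p p = integral\<^sup>L \<mu> (\<lambda>U. D U * D U)" "EP w q q = integral\<^sup>L \<mu> (\<lambda>U. E U * E U)"
    unfolding defs by (rule EP_diag)+
  have ed: "ED w p q = integral\<^sup>L \<mu> (\<lambda>U. D U * E U)" unfolding defs ED_def ..
  show ?thesis using fp fm fi i1 i1b i2 i2b ep epp ed by argo
qed

lemma int_comb: "integrable \<mu> (\<lambda>U. (cmod (a * Qf n w U i j + b * Qf n w U p q + c * Qf n w U r t))\<^sup>2)"
proof (rule integ[where B="((cmod a + cmod b + cmod c) * WW w)\<^sup>2"])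
  show "continuous_on UNIV (\<lambda>U. (cmod (a * Qf n w U i j + b * Qf n w U p q + c * Qf n w U r t))\<^sup>2)"
    by (intro continuous_intros)
  fix U assume U: "U \<in> unitary_group n"
  have "cmod (a * Qf n w U i j + b * Qf n w U p q + c * Qf n w U r t)
      \<le> cmod a * cmod (Qf n w U i j) + cmod b * cmod (Qf n w U p q) + cmod c * cmod (Qf n w U r t)"
    by (metis norm_mult norm_triangle_mono order_refl)
  also have "\<dots> \<le> cmod a * WW w + cmod b * WW w + cmod c * WW w"
    using U by (intro add_mono mult_left_mono bnds) auto
  finally have "cmod (a * Qf n w U i j + b * Qf n w U p q + c * Qf n w U r t) \<le> (cmod a + cmod b + cmod c) * WW w"
    by (simp add: algebra_simps)
  then show "\<bar>(cmod (a * Qf n w U i j + b * Qf n w U p q + c * Qf n w U r t))\<^sup>2\<bar> \<le> ((cmod a + cmod b + cmod c) * WW w)\<^sup>2"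
    by (simp add: power_mono)
qed

lemma rotQ:
  assumes pq: "p < n" "q < n" "p \<noteq> q"
  shows "EQ w p p = 2 * EQ w p q"
proof -
  define A where "A U = Qf n w U p p" for U
  define C where "C U = Qf n w U q q" for U
  define B where "B U = Qf n w U p q" for U
  note defs = A_def B_def C_def
  have fp: "integral\<^sup>L \<mu> (\<lambda>U. (cmod ((1/2) * A U + B U + (1/2) * C U))\<^sup>2) = integral\<^sup>L \<mu> (\<lambda>U. (cmod (A U))\<^sup>2)"
    by (rule inv[OF Gp_unitary[OF pq]]) (simp_all add: defs Gp_Qf[OF pq] continuous_intros)
  have fm: "integral\<^sup>L \<mu> (\<lambda>U. (cmod ((1/2) * A U - B U + (1/2) * C U))\<^sup>2) = integral\<^sup>L \<mu> (\<lambda>U. (cmod (A U))\<^sup>2)"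
    by (rule inv[OF Gn_unitary[OF pq]]) (simp_all add: defs Gn_Qf[OF pq] continuous_intros)
  have fi: "integral\<^sup>L \<mu> (\<lambda>U. - Re (A U * cnj (C U))) = integral\<^sup>L \<mu> (\<lambda>U. Re (A U * cnj (C U)))"
    by (rule inv[OF Gi_unitary[OF pq]]) (simp_all add: defs Gi_Qf[OF pq] continuous_intros)
  then have "- integral\<^sup>L \<mu> (\<lambda>U. Re (A U * cnj (C U))) = integral\<^sup>L \<mu> (\<lambda>U. Re (A U * cnj (C U)))"
    by (simp only: Bochner_Integration.integral_minus)
  then have z: "integral\<^sup>L \<mu> (\<lambda>U. Re (A U * cnj (C U))) = 0" by linarith
  have intp: "integrable \<mu> (\<lambda>U. (cmod ((1/2) * A U + B U + (1/2) * C U))\<^sup>2)"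
    using int_comb[of "1/2" w p p 1 p q "1/2" q q] by (simp add: defs)
  have intm: "integrable \<mu> (\<lambda>U. (cmod ((1/2) * A U - B U + (1/2) * C U))\<^sup>2)"
    using int_comb[of "1/2" w p p "-1" p q "1/2" q q] by (simp add: defs)
  have pw: "(cmod ((1/2) * a + b + (1/2) * c))\<^sup>2 + (cmod ((1/2) * a - b + (1/2) * c))\<^sup>2 =
      (1/2) * (cmod a)\<^sup>2 + (1/2) * (cmod c)\<^sup>2 + Re (a * cnj c) + 2 * (cmod b)\<^sup>2" for a b c :: complex
    by (simp only: cmod_power2, simp add: power2_eq_square field_simps)
  have "integral\<^sup>L \<mu> (\<lambda>U. (cmod ((1/2) * A U + B U + (1/2) * C U))\<^sup>2) + integral\<^sup>L \<mu> (\<lambda>U. (cmod ((1/2) * A U - B U + (1/2) * C U))\<^sup>2)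
     = integral\<^sup>L \<mu> (\<lambda>U. (cmod ((1/2) * A U + B U + (1/2) * C U))\<^sup>2 + (cmod ((1/2) * A U - B U + (1/2) * C U))\<^sup>2)"
    by (rule Bochner_Integration.integral_add[OF intp intm, symmetric])
  also have "\<dots> = integral\<^sup>L \<mu> (\<lambda>U. (1/2) * (cmod (A U))\<^sup>2 + (1/2) * (cmod (C U))\<^sup>2 + Re (A U * cnj (C U)) + 2 * (cmod (B U))\<^sup>2)"
    by (intro Bochner_Integration.integral_cong refl) (rule pw)
  also have "\<dots> = (1/2) * EQ w p p + (1/2) * EQ w q q + integral\<^sup>L \<mu> (\<lambda>U. Re (A U * cnj (C U))) + 2 * EQ w p q"
    unfolding defs EQ_def by (simp only: Bochner_Integration.integral_add Bochner_Integration.integral_mult_right_zero Bochner_Integration.integrable_add Bochner_Integration.integrable_mult_right int_cQ int_QR)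
  finally have s: "integral\<^sup>L \<mu> (\<lambda>U. (cmod ((1/2) * A U + B U + (1/2) * C U))\<^sup>2) + integral\<^sup>L \<mu> (\<lambda>U. (cmod ((1/2) * A U - B U + (1/2) * C U))\<^sup>2)
     = (1/2) * EQ w p p + (1/2) * EQ w q q + integral\<^sup>L \<mu> (\<lambda>U. Re (A U * cnj (C U))) + 2 * EQ w p q" .
  have eqq: "EQ w q q = EQ w p p"
    using EQ_swap[OF pq, of p p w] pq by (simp add: sig_def)
  have "EQ w p p = integral\<^sup>L \<mu> (\<lambda>U. (cmod (A U))\<^sup>2)" unfolding defs EQ_def ..
  then show ?thesis using s fp fm z eqq by linarith
qed

end

context haar_ctx
begin

lemma int_sum2:
  assumes "\<And>i j. integrable \<mu> (F i j)"
  shows "integral\<^sup>L \<mu> (\<lambda>U. \<Sum>i<m. \<Sum>j<m. F i j U) = (\<Sum>i<m. \<Sum>j<m. integral\<^sup>L \<mu> (F i j))"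
proof -
  have "integral\<^sup>L \<mu> (\<lambda>U. \<Sum>i<m. \<Sum>j<m. F i j U) = (\<Sum>i<m. integral\<^sup>L \<mu> (\<lambda>U. \<Sum>j<m. F i j U))"
    by (rule Bochner_Integration.integral_sum) (intro Bochner_Integration.integrable_sum assms)
  also have "\<dots> = (\<Sum>i<m. \<Sum>j<m. integral\<^sup>L \<mu> (F i j))"
    by (intro sum.cong refl Bochner_Integration.integral_sum assms)
  finally show ?thesis .
qed

lemma P_main:
  assumes n2: "2 \<le> n"
  shows "\<And>i j. i < n \<Longrightarrow> j < n \<Longrightarrow> EP w i j = (if i = j then EP w 0 0 else EP w 0 1)"
    "real n * real n * EP w 0 0 - (real n * real n - real n) * EP w 0 1 = (\<Sum>l<n. w l)\<^sup>2"
    "real n * EP w 0 0 + (real n * real n - real n) * EP w 0 1 = (\<Sum>l<n. (w l)\<^sup>2)"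
proof -
  note cg = const_gen[of "EP w", OF EP_swap n2]
  show c: "EP w i j = (if i = j then EP w 0 0 else EP w 0 1)" if "i < n" "j < n" for i j
    using cg(1)[of i] cg(2)[of i j] that by (cases "i = j") auto
  have ed: "ED w i j = (if i = j then EP w 0 0 else EP w 0 0 - EP w 0 1)" if "i < n" "j < n" for i j
  proof (cases "i = j")
    case True then show ?thesis using c[of i i] that by (simp add: ED_def EP_diag)
  next
    case False
    have "2 * EP w i i = (EP w i i + EP w j j) / 2 + ED w i j + EP w i j" by (rule rotP) (use that False in auto)
    then show ?thesis using c[of i i] c[of j j] c[of i j] that False by auto
  qed
  have "integral\<^sup>L \<mu> (\<lambda>U. (\<Sum>i<n. Re (Pf n w U i i)) * (\<Sum>i<n. Re (Pf n w U i i))) = (\<Sum>l<n. w l) * (\<Sum>l<n. w l)"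
    by (rule int_const) (auto intro!: continuous_intros simp: Pf_trace)
  moreover have "integral\<^sup>L \<mu> (\<lambda>U. (\<Sum>i<n. Re (Pf n w U i i)) * (\<Sum>i<n. Re (Pf n w U i i)))
      = integral\<^sup>L \<mu> (\<lambda>U. \<Sum>i<n. \<Sum>j<n. Re (Pf n w U i i) * Re (Pf n w U j j))"
    by (simp only: sum_product)
  moreover have "\<dots> = (\<Sum>i<n. \<Sum>j<n. ED w i j)"
    unfolding ED_def by (rule int_sum2) (rule int_RR)
  moreover have "\<dots> = (\<Sum>i<n. \<Sum>j<n. if i = j then EP w 0 0 else EP w 0 0 - EP w 0 1)"
    using ed by (intro sum.cong refl) auto
  ultimately show "real n * real n * EP w 0 0 - (real n * real n - real n) * EP w 0 1 = (\<Sum>l<n. w l)\<^sup>2"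
    by (simp add: sum_if_diag power2_eq_square algebra_simps)
  have "integral\<^sup>L \<mu> (\<lambda>U. \<Sum>i<n. \<Sum>j<n. (cmod (Pf n w U i j))\<^sup>2) = (\<Sum>l<n. (w l)\<^sup>2)"
    by (rule int_const) (auto intro!: continuous_intros simp: Pf_sq)
  moreover have "integral\<^sup>L \<mu> (\<lambda>U. \<Sum>i<n. \<Sum>j<n. (cmod (Pf n w U i j))\<^sup>2) = (\<Sum>i<n. \<Sum>j<n. EP w i j)"
    unfolding EP_def by (rule int_sum2) (rule int_cP)
  moreover have "\<dots> = (\<Sum>i<n. \<Sum>j<n. if i = j then EP w 0 0 else EP w 0 1)"
    by (intro sum.cong refl) (rule c, auto)
  ultimately show "real n * EP w 0 0 + (real n * real n - real n) * EP w 0 1 = (\<Sum>l<n. (w l)\<^sup>2)"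
    by (simp add: sum_if_diag)
qed

lemma Q_main:
  assumes n2: "2 \<le> n"
  shows "\<And>i j. i < n \<Longrightarrow> j < n \<Longrightarrow> EQ w i j = (if i = j then 2 * EQ w 0 1 else EQ w 0 1)"
    "(real n * real n + real n) * EQ w 0 1 = (\<Sum>l<n. (w l)\<^sup>2)"
proof -
  note cg = const_gen[of "EQ w", OF EQ_swap n2]
  have r: "EQ w 0 0 = 2 * EQ w 0 1" by (rule rotQ) (use n2 in auto)
  show c: "EQ w i j = (if i = j then 2 * EQ w 0 1 else EQ w 0 1)" if "i < n" "j < n" for i j
    using cg(1)[of i] cg(2)[of i j] r that by (cases "i = j") auto
  have "integral\<^sup>L \<mu> (\<lambda>U. \<Sum>i<n. \<Sum>j<n. (cmod (Qf n w U i j))\<^sup>2) = (\<Sum>l<n. (w l)\<^sup>2)"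
    by (rule int_const) (auto intro!: continuous_intros simp: Qf_sq)
  moreover have "integral\<^sup>L \<mu> (\<lambda>U. \<Sum>i<n. \<Sum>j<n. (cmod (Qf n w U i j))\<^sup>2) = (\<Sum>i<n. \<Sum>j<n. EQ w i j)"
    unfolding EQ_def by (rule int_sum2) (rule int_cQ)
  moreover have "\<dots> = (\<Sum>i<n. \<Sum>j<n. if i = j then 2 * EQ w 0 1 else EQ w 0 1)"
    by (intro sum.cong refl) (rule c, auto)
  ultimately show "(real n * real n + real n) * EQ w 0 1 = (\<Sum>l<n. (w l)\<^sup>2)"
    by (simp add: sum_if_diag algebra_simps)
qed

lemma E_trace:
  assumes n2: "2 \<le> n" and kn: "k \<le> n" and z: "\<And>l. l < n \<Longrightarrow> z n l \<noteq> 0"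
  shows "integral\<^sup>L \<mu> (\<lambda>U. mtrace (2*k) (mmul (2*k) (mmul (2*k) (Jmat k) (Mnk n k z U)) (mmul (2*k) (Jmat k) (Mnk n k z U))))
    = 2 * ((real k * real k + real k) * EQ (wb n z) 0 1) - 2 * (real k * EP (wa n z) 0 0 + (real k * real k - real k) * EP (wa n z) 0 1)"
proof -
  have "integral\<^sup>L \<mu> (\<lambda>U. mtrace (2*k) (mmul (2*k) (mmul (2*k) (Jmat k) (Mnk n k z U)) (mmul (2*k) (Jmat k) (Mnk n k z U))))
     = integral\<^sup>L \<mu> (\<lambda>U. \<Sum>i<k. \<Sum>j<k. 2 * (cmod (Qf n (wb n z) U i j))\<^sup>2 - 2 * (cmod (Pf n (wa n z) U i j))\<^sup>2)"
    by (intro Bochner_Integration.integral_cong refl trace_identity kn z) auto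
  also have "\<dots> = (\<Sum>i<k. \<Sum>j<k. 2 * EQ (wb n z) i j - 2 * EP (wa n z) i j)"
  proof -
    have "integral\<^sup>L \<mu> (\<lambda>U. \<Sum>i<k. \<Sum>j<k. 2 * (cmod (Qf n (wb n z) U i j))\<^sup>2 - 2 * (cmod (Pf n (wa n z) U i j))\<^sup>2)
       = (\<Sum>i<k. \<Sum>j<k. integral\<^sup>L \<mu> (\<lambda>U. 2 * (cmod (Qf n (wb n z) U i j))\<^sup>2 - 2 * (cmod (Pf n (wa n z) U i j))\<^sup>2))"
      by (rule int_sum2) (intro Bochner_Integration.integrable_diff Bochner_Integration.integrable_mult_right int_cQ int_cP)
    also have "\<dots> = (\<Sum>i<k. \<Sum>j<k. 2 * EQ (wb n z) i j - 2 * EP (wa n z) i j)"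
      unfolding EQ_def EP_def
      by (intro sum.cong refl) (simp only: Bochner_Integration.integral_diff Bochner_Integration.integrable_mult_right Bochner_Integration.integral_mult_right_zero int_cQ int_cP)
    finally show ?thesis .
  qed
  also have "\<dots> = (\<Sum>i<k. \<Sum>j<k. if i = j then 2 * (2 * EQ (wb n z) 0 1) - 2 * EP (wa n z) 0 0 else 2 * EQ (wb n z) 0 1 - 2 * EP (wa n z) 0 1)"
  proof (intro sum.cong refl)
    fix i j assume "i \<in> {..<k}" "j \<in> {..<k}"
    then have ij: "i < n" "j < n" using kn by auto
    show "2 * EQ (wb n z) i j - 2 * EP (wa n z) i j = (if i = j then 2 * (2 * EQ (wb n z) 0 1) - 2 * EP (wa n z) 0 0 else 2 * EQ (wb n z) 0 1 - 2 * EP (wa n z) 0 1)"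
      using Q_main(1)[OF n2 ij, of "wb n z"] P_main(1)[OF n2 ij, of "wa n z"] by simp
  qed
  also have "\<dots> = 2 * ((real k * real k + real k) * EQ (wb n z) 0 1) - 2 * (real k * EP (wa n z) 0 0 + (real k * real k - real k) * EP (wa n z) 0 1)"
    by (simp add: sum_if_diag algebra_simps)
  finally show ?thesis .
qed

end

lemma arith_core:
  fixes n k \<alpha> \<beta> \<gamma> T S2 Sb :: real
  assumes n2: "2 \<le> n" and k1: "1 \<le> k" and kn: "k \<le> n"
    and h1: "n * n * \<alpha> - (n * n - n) * \<beta> = T\<^sup>2"
    and h2: "n * \<alpha> + (n * n - n) * \<beta> = S2"
    and h3: "(n * n + n) * \<gamma> = Sb" and sb: "Sb \<le> S2" and b0: "0 \<le> \<beta>" and g0: "0 \<le> \<gamma>"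
  shows "\<bar>2 * ((k * k + k) * \<gamma>) - 2 * (k * \<alpha> + (k * k - k) * \<beta>) - (- 2 * k * (T / n)\<^sup>2)\<bar> \<le> 8 * k\<^sup>2 * S2 / n\<^sup>2"
proof -
  have np: "0 < n" using n2 by simp
  have nn: "0 < n * n" using np by simp
  have n0: "n \<noteq> 0" using np by simp
  have "\<alpha> * (n * n) = T\<^sup>2 + (n * n - n) * \<beta>" using h1 by (simp add: algebra_simps)
  then have al: "\<alpha> = (T\<^sup>2 + (n * n - n) * \<beta>) / (n * n)" using nn np by (simp add: eq_divide_eq)
  have "n * (n * \<alpha> + (n * n - n) * \<beta>) - (n * n * \<alpha> - (n * n - n) * \<beta>) = n * S2 - T\<^sup>2"
    using h1 h2 by simp
  then have "(n * n - n) * (n + 1) * \<beta> = n * S2 - T\<^sup>2" by (simp add: algebra_simps)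
  then have "n * ((n * n - 1) * \<beta>) \<le> n * S2" by (simp add: algebra_simps) (smt (verit) zero_le_power2)
  then have bS: "(n * n - 1) * \<beta> \<le> S2" using np by simp
  have "n * n * \<beta> \<le> 2 * ((n * n - 1) * \<beta>)"
  proof -
    have "2 * 2 \<le> n * n" using mult_mono[OF n2 n2] np by simp
    then have "n * n \<le> 2 * (n * n - 1)" by (simp add: right_diff_distrib)
    then show ?thesis using b0 by (metis mult.assoc mult_right_mono)
  qed
  then have bb: "n * n * \<beta> \<le> 2 * S2" using bS by linarith
  have gg: "n * n * \<gamma> \<le> S2" using h3 sb g0 np by (smt (verit) mult_nonneg_nonneg distrib_right)
  define A1 where "A1 = 2 * (k * k + k) * \<gamma>"
  define c where "c = (n * n - n) / (n * n)"
  define A2 where "A2 = c * (2 * k * \<beta>)"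
  define A3 where "A3 = 2 * (k * k - k) * \<beta>"
  have err: "2 * ((k * k + k) * \<gamma>) - 2 * (k * \<alpha> + (k * k - k) * \<beta>) - (- 2 * k * (T / n)\<^sup>2) = A1 - A2 - A3"
    unfolding A1_def A2_def A3_def c_def al using n0 by (simp add: field_simps power2_eq_square)
  have q: "0 \<le> c" "c \<le> 1" unfolding c_def using np n2 by (auto simp: field_simps)
  have A1: "0 \<le> A1" "A1 * (n * n) \<le> 4 * (k * k) * S2"
  proof -
    show "0 \<le> A1" unfolding A1_def using g0 k1 by simp
    have "A1 * (n * n) = 2 * (k * k + k) * (n * n * \<gamma>)" unfolding A1_def by (simp add: algebra_simps)
    also have "\<dots> \<le> 2 * (k * k + k) * S2" using gg k1 by (intro mult_left_mono) auto
    also have "\<dots> \<le> 4 * (k * k) * S2"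
    proof -
      have "0 \<le> S2" using gg g0 nn by (smt (verit) mult_nonneg_nonneg)
      moreover have "k \<le> k * k" using mult_left_mono[of 1 k k] k1 by simp
      then have "2 * (k * k + k) \<le> 4 * (k * k)" by argo
      ultimately show ?thesis by (metis mult_right_mono)
    qed
    finally show "A1 * (n * n) \<le> 4 * (k * k) * S2" .
  qed
  have A23: "0 \<le> A2" "0 \<le> A3" "(A2 + A3) * (n * n) \<le> 4 * (k * k) * S2"
  proof -
    show "0 \<le> A2" unfolding A2_def using q b0 k1 by simp
    show "0 \<le> A3" unfolding A3_def using b0 k1 by simp
    have "A2 \<le> 1 * (2 * k * \<beta>)" unfolding A2_def using q b0 k1 by (intro mult_right_mono) auto
    then have "A2 + A3 \<le> 2 * (k * k) * \<beta>" unfolding A3_def by (simp add: algebra_simps)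
    then have "(A2 + A3) * (n * n) \<le> (2 * (k * k) * \<beta>) * (n * n)" using nn by (intro mult_right_mono) auto
    also have "\<dots> = 2 * (k * k) * (n * n * \<beta>)" by (simp only: ac_simps)
    also have "\<dots> \<le> 2 * (k * k) * (2 * S2)" using bb k1 by (intro mult_left_mono) auto
    finally show "(A2 + A3) * (n * n) \<le> 4 * (k * k) * S2" by simp
  qed
  have "\<bar>A1 - A2 - A3\<bar> * (n * n) \<le> 4 * (k * k) * S2 + 4 * (k * k) * S2"
  proof -
    have "\<bar>A1 - A2 - A3\<bar> \<le> A1 + (A2 + A3)" using A1 A23 by linarith
    then have "\<bar>A1 - A2 - A3\<bar> * (n * n) \<le> A1 * (n * n) + (A2 + A3) * (n * n)" using nn
      by (metis distrib_right less_imp_le mult_right_mono)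
    then show ?thesis using A1 A23 by linarith
  qed
  then have "\<bar>A1 - A2 - A3\<bar> \<le> 8 * (k * k) * S2 / (n * n)" using nn by (simp add: field_simps)
  then show ?thesis using err by (simp add: power2_eq_square)
qed

lemma per_n:
  assumes haar: "haar_unitary n \<mu>" and n2: "2 \<le> n" and k1: "1 \<le> k" and kn: "k \<le> n"
    and z1: "\<And>j. j < n \<Longrightarrow> z n j \<ge> 1"
  shows "\<bar>(\<integral>U. mtrace (2 * k) (mmul (2 * k) (mmul (2 * k) (Jmat k) (Mnk n k z U))
                                               (mmul (2 * k) (Jmat k) (Mnk n k z U))) \<partial>\<mu>)
       - (- 2 * real k * (avg_energy n z)\<^sup>2)\<bar>
     \<le> 8 * (real k)\<^sup>2 * (Znorm n z * (real n * avg_energy n z)) / (real n)\<^sup>2"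
proof -
  interpret haar_ctx n \<mu> by unfold_locales (rule haar)
  have z0: "z n l \<noteq> 0" if "l < n" for l using z1[OF that] by auto
  define \<alpha> where "\<alpha> = EP (wa n z) 0 0"
  define \<beta> where "\<beta> = EP (wa n z) 0 1"
  define \<gamma> where "\<gamma> = EQ (wb n z) 0 1"
  define T where "T = (\<Sum>l<n. wa n z l)"
  define S2 where "S2 = (\<Sum>l<n. (wa n z l)\<^sup>2)"
  define Sb where "Sb = (\<Sum>l<n. (wb n z l)\<^sup>2)"
  have Et: "(\<integral>U. mtrace (2 * k) (mmul (2 * k) (mmul (2 * k) (Jmat k) (Mnk n k z U))
                                               (mmul (2 * k) (Jmat k) (Mnk n k z U))) \<partial>\<mu>)
     = 2 * ((real k * real k + real k) * \<gamma>) - 2 * (real k * \<alpha> + (real k * real k - real k) * \<beta>)"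
    unfolding \<alpha>_def \<beta>_def \<gamma>_def by (rule E_trace[where z=z, OF n2 kn z0])
  have h1: "real n * real n * \<alpha> - (real n * real n - real n) * \<beta> = T\<^sup>2"
    unfolding \<alpha>_def \<beta>_def T_def by (rule P_main(2)[OF n2])
  have h2: "real n * \<alpha> + (real n * real n - real n) * \<beta> = S2"
    unfolding \<alpha>_def \<beta>_def S2_def by (rule P_main(3)[OF n2])
  have h3: "(real n * real n + real n) * \<gamma> = Sb"
    unfolding \<gamma>_def Sb_def by (rule Q_main(2)[OF n2])
  have wab: "(wb n z l)\<^sup>2 \<le> (wa n z l)\<^sup>2" "0 \<le> wa n z l" "wa n z l \<le> z n l" if "l < n" for l
  proof -
    have zz: "1 \<le> z n l" using z1[OF that] .
    have iz: "0 < 1 / z n l" "1 / z n l \<le> 1" using zz by auto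
    have A: "0 \<le> (x + y) / 2 \<and> (x + y) / 2 \<le> x \<and> \<bar>(x - y) / 2\<bar> \<le> (x + y) / 2"
      if "1 \<le> x" "0 < y" "y \<le> 1" for x y :: real
      using that by (auto simp: abs_le_iff)
    note B = A[OF zz iz]
    have "\<bar>wb n z l\<bar> \<le> wa n z l" unfolding wa_def wb_def using B by blast
    then show "(wb n z l)\<^sup>2 \<le> (wa n z l)\<^sup>2"
      by (metis abs_ge_zero power2_abs power_mono)
    show "0 \<le> wa n z l" unfolding wa_def using B by blast
    show "wa n z l \<le> z n l" unfolding wa_def using B by blast
  qed
  have sb: "Sb \<le> S2" unfolding Sb_def S2_def by (intro sum_mono wab) auto
  have b0: "0 \<le> \<beta>" unfolding \<beta>_def EP_def by (intro Bochner_Integration.integral_nonneg) auto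
  have g0: "0 \<le> \<gamma>" unfolding \<gamma>_def EQ_def by (intro Bochner_Integration.integral_nonneg) auto
  have lam: "avg_energy n z = T / real n"
    unfolding avg_energy_def T_def wa_def by (simp add: sum_divide_distrib[symmetric] sum.distrib)
  have core: "\<bar>2 * ((real k * real k + real k) * \<gamma>) - 2 * (real k * \<alpha> + (real k * real k - real k) * \<beta>) - (- 2 * real k * (T / real n)\<^sup>2)\<bar>
      \<le> 8 * (real k)\<^sup>2 * S2 / (real n)\<^sup>2"
    by (rule arith_core[OF _ _ _ h1 h2 h3 sb b0 g0]) (use n2 k1 kn in auto)
  have zn: "z n l \<le> Znorm n z" if "l < n" for l
  proof -
    have "\<bar>z n l\<bar> \<le> Znorm n z" unfolding Znorm_def using that by (intro Max_ge) auto
    then show ?thesis by simp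
  qed
  have S2b: "S2 \<le> Znorm n z * T"
  proof -
    have "S2 \<le> (\<Sum>l<n. Znorm n z * wa n z l)" unfolding S2_def
    proof (intro sum_mono)
      fix l assume "l \<in> {..<n}"
      then have l: "l < n" by simp
      have "wa n z l * wa n z l \<le> Znorm n z * wa n z l"
        using wab(2,3)[OF l] zn[OF l] by (intro mult_right_mono) auto
      then show "(wa n z l)\<^sup>2 \<le> Znorm n z * wa n z l" by (simp add: power2_eq_square)
    qed
    then show ?thesis unfolding T_def by (simp add: sum_distrib_left)
  qed
  have np: "0 < real n" using n2 by simp
  have T_eq: "T = real n * avg_energy n z" using lam np by simp
  have "8 * (real k)\<^sup>2 * S2 / (real n)\<^sup>2 \<le> 8 * (real k)\<^sup>2 * (Znorm n z * (real n * avg_energy n z)) / (real n)\<^sup>2"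
    using S2b T_eq np by (intro divide_right_mono mult_left_mono) auto
  then show ?thesis using core Et lam by simp
qed

lemma powr_id:
  assumes "0 < (x::real)"
  shows "x powr (2 * a + b - 1) = x powr a * x powr a * x powr b / x"
proof -
  have e: "2 * a + b - 1 = (a + a + b) - 1" by simp
  show ?thesis unfolding e powr_diff powr_add using assms by simp
qed

theorem corollary1:
  fixes z :: "nat \<Rightarrow> nat \<Rightarrow> real"
    and k :: "nat \<Rightarrow> nat"
    and \<zeta> \<kappa> :: real
    and \<mu> :: "nat \<Rightarrow> (nat \<Rightarrow> nat \<Rightarrow> complex) measure"
  assumes z_ge1: "\<And>n j. j < n \<Longrightarrow> z n j \<ge> 1"
    and zeta: "0 \<le> \<zeta>" "\<zeta> < 1"
    and squeezing: "\<exists>C>0. \<forall>\<^sub>F n in sequentially. Znorm n z \<le> C * real n powr \<zeta>"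
    and energy_bdd: "\<exists>B. \<forall>n. avg_energy n z \<le> B"
    and k_range: "\<And>n. n \<ge> 1 \<Longrightarrow> 1 \<le> k n \<and> k n \<le> n"
    and kappa: "0 \<le> \<kappa>" "\<kappa> < 1"
    and k_bdd: "\<exists>K>0. \<forall>\<^sub>F n in sequentially. real (k n) \<le> K * real n powr \<kappa>"
    and haar: "\<And>n. haar_unitary n (\<mu> n)"
  shows "\<exists>C. \<forall>\<^sub>F n in sequentially.
     \<bar>(\<integral>U. mtrace (2 * k n) (mmul (2 * k n) (mmul (2 * k n) (Jmat (k n)) (Mnk n (k n) z U))
                                               (mmul (2 * k n) (Jmat (k n)) (Mnk n (k n) z U))) \<partial>\<mu> n)
       - (- 2 * real (k n) * (avg_energy n z)\<^sup>2)\<bar>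
     \<le> C * real n powr (2 * \<kappa> + \<zeta> - 1)"
proof -
  obtain Cz where Cz: "Cz > 0" "\<forall>\<^sub>F n in sequentially. Znorm n z \<le> Cz * real n powr \<zeta>"
    using squeezing by blast
  obtain K where K: "K > 0" "\<forall>\<^sub>F n in sequentially. real (k n) \<le> K * real n powr \<kappa>"
    using k_bdd by blast
  obtain B where B: "\<And>n. avg_energy n z \<le> B" using energy_bdd by blast
  have ev2: "\<forall>\<^sub>F n in sequentially. 2 \<le> n" by (rule eventually_ge_at_top)
  show ?thesis
  proof (rule exI[of _ "8 * K\<^sup>2 * Cz * B"])
    show "\<forall>\<^sub>F n in sequentially.
     \<bar>(\<integral>U. mtrace (2 * k n) (mmul (2 * k n) (mmul (2 * k n) (Jmat (k n)) (Mnk n (k n) z U))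
                                               (mmul (2 * k n) (Jmat (k n)) (Mnk n (k n) z U))) \<partial>\<mu> n)
       - (- 2 * real (k n) * (avg_energy n z)\<^sup>2)\<bar>
     \<le> (8 * K\<^sup>2 * Cz * B) * real n powr (2 * \<kappa> + \<zeta> - 1)"
      using Cz(2) K(2) ev2
    proof eventually_elim
      case (elim n)
      have kr: "1 \<le> k n" "k n \<le> n" using k_range[of n] elim(3) by auto
      have np: "0 < real n" using elim(3) by simp
      define lam where "lam = avg_energy n z"
      have lam0: "0 \<le> lam"
      proof -
        have "0 \<le> (\<Sum>j<n. z n j + 1 / z n j)"
        proof (intro sum_nonneg)
          fix j assume "j \<in> {..<n}"
          then have "1 \<le> z n j" using z_ge1 by simp
          then show "0 \<le> z n j + 1 / z n j" by (simp add: add_nonneg_nonneg)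
        qed
        then show ?thesis unfolding lam_def avg_energy_def by simp
      qed
      have Zn0: "0 \<le> Znorm n z"
      proof -
        have "\<bar>z n 0\<bar> \<le> Znorm n z" unfolding Znorm_def using np by (intro Max_ge) auto
        then show ?thesis by linarith
      qed
      have main: "\<bar>(\<integral>U. mtrace (2 * k n) (mmul (2 * k n) (mmul (2 * k n) (Jmat (k n)) (Mnk n (k n) z U))
                                               (mmul (2 * k n) (Jmat (k n)) (Mnk n (k n) z U))) \<partial>\<mu> n)
       - (- 2 * real (k n) * (avg_energy n z)\<^sup>2)\<bar>
         \<le> 8 * (real (k n))\<^sup>2 * (Znorm n z * (real n * lam)) / (real n)\<^sup>2"
        unfolding lam_def by (rule per_n[OF haar elim(3) kr z_ge1])
      have k2: "(real (k n))\<^sup>2 \<le> (K * real n powr \<kappa>)\<^sup>2" using elim(2) by (intro power_mono) auto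
      have X: "Znorm n z * (real n * lam) \<le> (Cz * real n powr \<zeta>) * (real n * B)"
        using elim(1) B[of n] np lam0 Zn0 Cz(1) unfolding lam_def
        by (intro mult_mono mult_left_mono) auto
      have "(real (k n))\<^sup>2 * (Znorm n z * (real n * lam)) \<le> (K * real n powr \<kappa>)\<^sup>2 * ((Cz * real n powr \<zeta>) * (real n * B))"
        by (rule mult_mono[OF k2 X]) (use Zn0 np lam0 in auto)
      then have "8 * (real (k n))\<^sup>2 * (Znorm n z * (real n * lam)) / (real n)\<^sup>2
          \<le> 8 * ((K * real n powr \<kappa>)\<^sup>2 * ((Cz * real n powr \<zeta>) * (real n * B))) / (real n)\<^sup>2"
        using np by (intro divide_right_mono) auto
      also have "\<dots> = (8 * K\<^sup>2 * Cz * B) * (real n powr \<kappa> * real n powr \<kappa> * real n powr \<zeta> / real n)"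
        using np by (simp add: power2_eq_square field_simps)
      also have "\<dots> = (8 * K\<^sup>2 * Cz * B) * real n powr (2 * \<kappa> + \<zeta> - 1)"
        using powr_id[OF np, of \<kappa> \<zeta>] by simp
      finally show ?case using main by linarith
    qed
  qed
qed

end
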